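(* Let $X$ be a commutative topological free algebra over $\mathbb{K}$ with a set of free generators $A$. Let $B,C$ be a partition of $A$ and suppose $\alpha=|C|$ is infinite with $\alpha\ge w(X)$. Let $Y=\langle B\rangle$. Then $X\setminus Y$ is strongly $\alpha$-dense-algebrable, i.e., there is a set of free generators $F\subset X$ with $|F|=\alpha$ such that $\langle F\rangle$ is dense in $X$ and $\langle F\rangle\subset (X\setminus Y)\cup\{0\}$.
   Context: Algebras are associative linear algebras over $\mathbb{K}$ ($\mathbb{R}$ or $\mathbb{C}$); a topological algebra is an algebra with a topology making sum, product and scalar multiplication continuous. $w(X)$ is the smallest cardinality of a base of the topology. $\langle S\rangle$ is the subalgebra generated by $S$. With $\mathbb{P}_n$ the polynomials in $n$ variables without constant term, a subset $S$ of a commutative algebra is a set of free generators (SFG) if $P(x_1,\dots,x_n)\ne0$ for every $n$, every non-zero $P\in\mathbb{P}_n$ and all pairwise distinct $x_1,\dots,x_n\in S$. $X$ is a commutative (topological) free algebra with SFG $A$ if $A$ is an SFG and $X=\langle A\rangle$. A subset $M$ of a commutative topological algebra is strongly $\alpha$-dense-algebrable if $M\cup\{0\}$ contains a dense subalgebra of the form $\langle F\rangle$ with $F$ an SFG of cardinality $\alpha$ (a dense $\alpha$-generated free subalgebra). *)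

theory Defs
  imports "HOL-Analysis.Analysis"
begin

text \<open>The scalar field is a set K of complex numbers which is either
  the reals (K = \<real>) or all of \<complex>. The algebra X is a subset of an ambient
  commutative ring with unit of type 'a (every algebra embeds into its unitization,
  so this is no restriction); the unit is only used to write monomials with powers. The topology of X is the
  subspace topology (only its restriction to X matters).\<close>

definition is_subalgebra :: "complex set \<Rightarrow> (complex \<Rightarrow> 'a::comm_ring_1 \<Rightarrow> 'a) \<Rightarrow> 'a set \<Rightarrow> bool" where
  "is_subalgebra K scal Z \<longleftrightarrow>
     0 \<in> Z \<and> (\<forall>x\<in>Z. \<forall>y\<in>Z. x + y \<in> Z \<and> x * y \<in> Z) \<and> (\<forall>x\<in>Z. - x \<in> Z)
     \<and> (\<forall>k\<in>K. \<forall>x\<in>Z. scal k x \<in> Z)"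

definition gen :: "complex set \<Rightarrow> (complex \<Rightarrow> 'a::comm_ring_1 \<Rightarrow> 'a) \<Rightarrow> 'a set \<Rightarrow> 'a set" where
  "gen K scal S = \<Inter>{Z. S \<subseteq> Z \<and> is_subalgebra K scal Z}"

definition is_comm_algebra :: "complex set \<Rightarrow> (complex \<Rightarrow> 'a::comm_ring_1 \<Rightarrow> 'a) \<Rightarrow> 'a set \<Rightarrow> bool" where
  "is_comm_algebra K scal X \<longleftrightarrow> is_subalgebra K scal X \<and>
     (\<forall>k\<in>K. \<forall>x\<in>X. \<forall>y\<in>X. scal k (x + y) = scal k x + scal k y) \<and>
     (\<forall>k\<in>K. \<forall>l\<in>K. \<forall>x\<in>X. scal (k + l) x = scal k x + scal l x) \<and>
     (\<forall>k\<in>K. \<forall>l\<in>K. \<forall>x\<in>X. scal (k * l) x = scal k (scal l x)) \<and>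
     (\<forall>x\<in>X. scal 1 x = x) \<and>
     (\<forall>k\<in>K. \<forall>x\<in>X. \<forall>y\<in>X. scal k (x * y) = scal k x * y)"

definition is_comm_top_algebra :: "complex set \<Rightarrow> (complex \<Rightarrow> 'a::{comm_ring_1,topological_space} \<Rightarrow> 'a) \<Rightarrow> 'a set \<Rightarrow> bool" where
  "is_comm_top_algebra K scal X \<longleftrightarrow> is_comm_algebra K scal X \<and>
     continuous_on (X \<times> X) (\<lambda>(x, y). x + y) \<and>
     continuous_on (X \<times> X) (\<lambda>(x, y). x * y) \<and>
     continuous_on (K \<times> X) (\<lambda>(k, x). scal k x)"

text \<open>P_n: polynomials in n variables (indices < n) with coefficients in K and without
  constant term, given by their coefficient function on exponent vectors.\<close>
definition poly_n :: "complex set \<Rightarrow> nat \<Rightarrow> ((nat \<Rightarrow> nat) \<Rightarrow> complex) set" where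
  "poly_n K n = {P. finite {m. P m \<noteq> 0} \<and> (\<forall>m. P m \<in> K) \<and>
      (\<forall>m. P m \<noteq> 0 \<longrightarrow> (\<forall>i\<ge>n. m i = 0) \<and> m \<noteq> (\<lambda>_. 0))}"

definition poly_eval :: "(complex \<Rightarrow> 'a::comm_ring_1 \<Rightarrow> 'a) \<Rightarrow> nat \<Rightarrow> ((nat \<Rightarrow> nat) \<Rightarrow> complex) \<Rightarrow> (nat \<Rightarrow> 'a) \<Rightarrow> 'a" where
  "poly_eval scal n P x = (\<Sum>m\<in>{m. P m \<noteq> 0}. scal (P m) (\<Prod>i<n. x i ^ m i))"

definition is_SFG :: "complex set \<Rightarrow> (complex \<Rightarrow> 'a::comm_ring_1 \<Rightarrow> 'a) \<Rightarrow> 'a set \<Rightarrow> bool" where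
  "is_SFG K scal S \<longleftrightarrow>
     (\<forall>n. \<forall>P\<in>poly_n K n. \<forall>x. P \<noteq> (\<lambda>_. 0) \<and> (\<forall>i<n. x i \<in> S) \<and> inj_on x {..<n}
        \<longrightarrow> poly_eval scal n P x \<noteq> 0)"

definition is_base_of :: "'a::topological_space set \<Rightarrow> 'a set set \<Rightarrow> bool" where
  "is_base_of X Bs \<longleftrightarrow> (\<forall>V\<in>Bs. openin (subtopology euclidean X) V) \<and>
     (\<forall>U. openin (subtopology euclidean X) U \<longrightarrow> (\<exists>S\<subseteq>Bs. U = \<Union>S))"

end

theory Submission
  imports Defs
begin


section \<open>Generated subalgebras\<close>

lemma gen_subalg: "is_subalgebra K scal (gen K scal S)"
  unfolding gen_def is_subalgebra_def by auto

lemma gen_least: "S \<subseteq> Z \<Longrightarrow> is_subalgebra K scal Z \<Longrightarrow> gen K scal S \<subseteq> Z"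
  unfolding gen_def by auto

lemma gen_incl: "S \<subseteq> gen K scal S"
  unfolding gen_def by auto

lemma gen_mono: "S \<subseteq> T \<Longrightarrow> gen K scal S \<subseteq> gen K scal T"
proof -
  assume "S \<subseteq> T"
  then have "S \<subseteq> gen K scal T" using gen_incl[of T K scal] by (rule order_trans)
  then show ?thesis using gen_least gen_subalg by blast
qed

lemma gen_0: "0 \<in> gen K scal S" using gen_subalg[of K scal S] unfolding is_subalgebra_def by blast
lemma gen_add: "x \<in> gen K scal S \<Longrightarrow> y \<in> gen K scal S \<Longrightarrow> x + y \<in> gen K scal S"
  using gen_subalg[of K scal S] unfolding is_subalgebra_def by blast
lemma gen_mult: "x \<in> gen K scal S \<Longrightarrow> y \<in> gen K scal S \<Longrightarrow> x * y \<in> gen K scal S"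
  using gen_subalg[of K scal S] unfolding is_subalgebra_def by blast
lemma gen_neg: "x \<in> gen K scal S \<Longrightarrow> - x \<in> gen K scal S"
  using gen_subalg[of K scal S] unfolding is_subalgebra_def by blast
lemma gen_scal: "k \<in> K \<Longrightarrow> x \<in> gen K scal S \<Longrightarrow> scal k x \<in> gen K scal S"
  using gen_subalg[of K scal S] unfolding is_subalgebra_def by blast

lemma gen_finite:
  assumes "y \<in> gen K scal S"
  shows "\<exists>T\<subseteq>S. finite T \<and> y \<in> gen K scal T"
proof -
  define U where "U = {y. \<exists>T\<subseteq>S. finite T \<and> y \<in> gen K scal T}"
  have two: "\<exists>T. T \<subseteq> S \<and> finite T \<and> x \<in> gen K scal T \<and> y \<in> gen K scal T" if "x \<in> U" "y \<in> U" for x y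
  proof -
    obtain T1 where T1: "T1 \<subseteq> S" "finite T1" "x \<in> gen K scal T1" using \<open>x \<in> U\<close> unfolding U_def by blast
    obtain T2 where T2: "T2 \<subseteq> S" "finite T2" "y \<in> gen K scal T2" using \<open>y \<in> U\<close> unfolding U_def by blast
    have "gen K scal T1 \<subseteq> gen K scal (T1 \<union> T2)" by (rule gen_mono) (rule Un_upper1)
    moreover have "gen K scal T2 \<subseteq> gen K scal (T1 \<union> T2)" by (rule gen_mono) (rule Un_upper2)
    ultimately have "T1 \<union> T2 \<subseteq> S \<and> finite (T1 \<union> T2) \<and> x \<in> gen K scal (T1 \<union> T2) \<and> y \<in> gen K scal (T1 \<union> T2)"
      using T1 T2 by blast
    then show ?thesis by (rule exI)
  qed
  have inU: "z \<in> U" if "T \<subseteq> S" "finite T" "z \<in> gen K scal T" for z T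
    unfolding U_def using that by blast
  have "is_subalgebra K scal U"
    unfolding is_subalgebra_def
  proof (intro conjI ballI)
    show "0 \<in> U" by (rule inU[of "{}"]) (auto intro: gen_0)
  next
    fix x y assume "x \<in> U" "y \<in> U"
    then obtain T where T: "T \<subseteq> S" "finite T" "x \<in> gen K scal T" "y \<in> gen K scal T" using two by metis
    show "x + y \<in> U" using inU[OF T(1,2) gen_add[OF T(3,4)]] .
  next
    fix x y assume "x \<in> U" "y \<in> U"
    then obtain T where T: "T \<subseteq> S" "finite T" "x \<in> gen K scal T" "y \<in> gen K scal T" using two by metis
    show "x * y \<in> U" using inU[OF T(1,2) gen_mult[OF T(3,4)]] .
  next
    fix x assume "x \<in> U"
    then obtain T where T: "T \<subseteq> S" "finite T" "x \<in> gen K scal T" unfolding U_def by blast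
    show "- x \<in> U" using inU[OF T(1,2) gen_neg[OF T(3)]] .
  next
    fix k x assume k: "k \<in> K" and "x \<in> U"
    then obtain T where T: "T \<subseteq> S" "finite T" "x \<in> gen K scal T" unfolding U_def by blast
    show "scal k x \<in> U" using inU[OF T(1,2) gen_scal[OF k T(3)]] .
  qed
  moreover have "S \<subseteq> U"
  proof
    fix s assume "s \<in> S"
    then show "s \<in> U" using inU[of "{s}" s] gen_incl[of "{s}" K scal] by blast
  qed
  ultimately have "gen K scal S \<subseteq> U" by (rule gen_least[rotated])
  then show ?thesis using assms unfolding U_def by blast
qed

lemma sub_sum: "is_subalgebra K scal Z \<Longrightarrow> (\<And>i. i \<in> I \<Longrightarrow> f i \<in> Z) \<Longrightarrow> sum f I \<in> Z"
proof (induction I rule: infinite_finite_induct)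
  case (infinite A) then show ?case by (simp add: is_subalgebra_def)
next
  case empty then show ?case by (simp add: is_subalgebra_def)
next
  case (insert x F) then show ?case by (simp add: is_subalgebra_def)
qed

lemma sub_pow: "is_subalgebra K scal Z \<Longrightarrow> x \<in> Z \<Longrightarrow> k \<ge> 1 \<Longrightarrow> x ^ k \<in> Z"
proof (induction k)
  case 0 then show ?case by simp
next
  case (Suc k) then show ?case
    by (cases "k = 0") (auto simp: is_subalgebra_def)
qed

lemma sub_prod_ne: "finite I \<Longrightarrow> I \<noteq> {} \<Longrightarrow> is_subalgebra K scal Z \<Longrightarrow> (\<And>i. i \<in> I \<Longrightarrow> f i \<in> Z) \<Longrightarrow> prod f I \<in> Z"
proof (induction I rule: finite_ne_induct)
  case (singleton x) then show ?case by simp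
next
  case (insert x F) then show ?case by (simp add: is_subalgebra_def)
qed

section \<open>Polynomial bookkeeping\<close>

definition good :: "nat \<Rightarrow> (nat \<Rightarrow> nat) \<Rightarrow> bool" where
  "good n m \<longleftrightarrow> m \<noteq> (\<lambda>_. 0) \<and> (\<forall>i\<ge>n. m i = 0)"

definition mono :: "nat \<Rightarrow> (nat \<Rightarrow> 'a::comm_ring_1) \<Rightarrow> (nat \<Rightarrow> nat) \<Rightarrow> 'a" where
  "mono n x m = (\<Prod>i<n. x i ^ m i)"

definition madd :: "(nat \<Rightarrow> nat) \<Rightarrow> (nat \<Rightarrow> nat) \<Rightarrow> (nat \<Rightarrow> nat)" where
  "madd m1 m2 = (\<lambda>i. m1 i + m2 i)"

definition pmul :: "((nat \<Rightarrow> nat) \<Rightarrow> complex) \<Rightarrow> ((nat \<Rightarrow> nat) \<Rightarrow> complex) \<Rightarrow> ((nat \<Rightarrow> nat) \<Rightarrow> complex)" where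
  "pmul P Q = (\<lambda>m. \<Sum>p\<in>{p \<in> {m. P m \<noteq> 0} \<times> {m. Q m \<noteq> 0}. madd (fst p) (snd p) = m}. P (fst p) * Q (snd p))"

definition pvar :: "nat \<Rightarrow> ((nat \<Rightarrow> nat) \<Rightarrow> complex)" where
  "pvar i = (\<lambda>m. if m = (\<lambda>j. if j = i then 1 else 0) then 1 else 0)"

lemma poly_n_iff: "P \<in> poly_n K n \<longleftrightarrow> finite {m. P m \<noteq> 0} \<and> (\<forall>m. P m \<in> K) \<and> (\<forall>m. P m \<noteq> 0 \<longrightarrow> good n m)"
  unfolding poly_n_def good_def by auto

lemma poly_eval_mono: "poly_eval scal n P x = (\<Sum>m\<in>{m. P m \<noteq> 0}. scal (P m) (mono n x m))"
  unfolding poly_eval_def mono_def by simp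

lemma mono_eq:
  assumes "good n m"
  shows "mono n x m = (\<Prod>i\<in>{i. i < n \<and> m i \<noteq> 0}. x i ^ m i)"
    and "{i. i < n \<and> m i \<noteq> 0} \<noteq> {}"
proof -
  show "mono n x m = (\<Prod>i\<in>{i. i < n \<and> m i \<noteq> 0}. x i ^ m i)"
    unfolding mono_def by (rule prod.mono_neutral_right) auto
  from assms obtain i where "m i \<noteq> 0" unfolding good_def by fastforce
  moreover then have "i < n" using assms unfolding good_def by (meson not_le)
  ultimately show "{i. i < n \<and> m i \<noteq> 0} \<noteq> {}" by blast
qed

lemma mono_in:
  assumes Z: "is_subalgebra K scal Z" and g: "good n m" and x: "\<And>i. i < n \<Longrightarrow> x i \<in> Z"
  shows "mono n x m \<in> Z"
proof -
  have "(\<Prod>i\<in>{i. i < n \<and> m i \<noteq> 0}. x i ^ m i) \<in> Z"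
  proof (rule sub_prod_ne[OF _ mono_eq(2)[OF g] Z])
    show "finite {i. i < n \<and> m i \<noteq> 0}" by simp
  next
    fix i assume "i \<in> {i. i < n \<and> m i \<noteq> 0}"
    then show "x i ^ m i \<in> Z" using sub_pow[OF Z x] by auto
  qed
  then show ?thesis unfolding mono_eq(1)[OF g] .
qed

lemma mono_add: "mono n x (madd m1 m2) = mono n x m1 * mono n x m2"
  unfolding mono_def madd_def by (simp add: power_add prod.distrib)

lemma good_madd: "good n m1 \<Longrightarrow> good n m2 \<Longrightarrow> good n (madd m1 m2)"
  unfolding good_def madd_def by (auto simp: fun_eq_iff)



locale calg =
  fixes K :: "complex set" and scal :: "complex \<Rightarrow> 'a::comm_ring_1 \<Rightarrow> 'a" and X :: "'a set"
  assumes K: "K = \<real> \<or> K = UNIV"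
    and ca: "is_comm_algebra K scal X"
begin

lemma K_add: "k \<in> K \<Longrightarrow> l \<in> K \<Longrightarrow> k + l \<in> K" using K by auto
lemma K_mult: "k \<in> K \<Longrightarrow> l \<in> K \<Longrightarrow> k * l \<in> K" using K by auto
lemma K_uminus: "k \<in> K \<Longrightarrow> - k \<in> K" using K by auto
lemma K_diff: "k \<in> K \<Longrightarrow> l \<in> K \<Longrightarrow> k - l \<in> K" using K by auto
lemma K_real: "complex_of_real r \<in> K" using K by auto
lemma K_0: "0 \<in> K" using K by auto
lemma K_1: "1 \<in> K" using K by auto
lemma K_m1: "-1 \<in> K" using K by auto
lemma K_sum: "(\<And>i. i \<in> I \<Longrightarrow> f i \<in> K) \<Longrightarrow> sum f I \<in> K"
  using K sum_in_Reals by auto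

lemma subX: "is_subalgebra K scal X" using ca unfolding is_comm_algebra_def by auto
lemma X0: "0 \<in> X" using subX unfolding is_subalgebra_def by auto
lemma Xadd: "x \<in> X \<Longrightarrow> y \<in> X \<Longrightarrow> x + y \<in> X" using subX unfolding is_subalgebra_def by auto
lemma Xmult: "x \<in> X \<Longrightarrow> y \<in> X \<Longrightarrow> x * y \<in> X" using subX unfolding is_subalgebra_def by auto
lemma Xneg: "x \<in> X \<Longrightarrow> - x \<in> X" using subX unfolding is_subalgebra_def by auto
lemma Xdiff: "x \<in> X \<Longrightarrow> y \<in> X \<Longrightarrow> x - y \<in> X" using Xadd[of x "-y"] Xneg[of y] by simp
lemma Xscal: "k \<in> K \<Longrightarrow> x \<in> X \<Longrightarrow> scal k x \<in> X" using subX unfolding is_subalgebra_def by auto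

lemma scal_add: "k \<in> K \<Longrightarrow> x \<in> X \<Longrightarrow> y \<in> X \<Longrightarrow> scal k (x + y) = scal k x + scal k y"
  using ca unfolding is_comm_algebra_def by auto
lemma scal_addk: "k \<in> K \<Longrightarrow> l \<in> K \<Longrightarrow> x \<in> X \<Longrightarrow> scal (k + l) x = scal k x + scal l x"
  using ca unfolding is_comm_algebra_def by auto
lemma scal_multk: "k \<in> K \<Longrightarrow> l \<in> K \<Longrightarrow> x \<in> X \<Longrightarrow> scal (k * l) x = scal k (scal l x)"
  using ca unfolding is_comm_algebra_def by auto
lemma scal_one: "x \<in> X \<Longrightarrow> scal 1 x = x"
  using ca unfolding is_comm_algebra_def by auto
lemma scal_mult: "k \<in> K \<Longrightarrow> x \<in> X \<Longrightarrow> y \<in> X \<Longrightarrow> scal k (x * y) = scal k x * y"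
  using ca unfolding is_comm_algebra_def by auto

lemma scal_0k: "x \<in> X \<Longrightarrow> scal 0 x = 0"
  using scal_addk[OF K_0 K_0, of x] by simp

lemma scal_k0: "k \<in> K \<Longrightarrow> scal k 0 = 0"
  using scal_add[of k 0 0] X0 by simp

lemma scal_neg1: "x \<in> X \<Longrightarrow> scal (-1) x = - x"
proof -
  assume x: "x \<in> X"
  have "0 = scal 1 x + scal (-1) x" using scal_addk[OF K_1 K_m1 x] scal_0k[OF x] by simp
  then show ?thesis using scal_one[OF x] by (simp add: eq_neg_iff_add_eq_0 add.commute)
qed

lemma scal_neg: "k \<in> K \<Longrightarrow> x \<in> X \<Longrightarrow> scal k (- x) = - scal k x"
proof -
  assume k: "k \<in> K" and x: "x \<in> X"
  have "scal k (- x) = scal k (scal (-1) x)" using scal_neg1[OF x] by simp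
  also have "\<dots> = scal (k * -1) x" using scal_multk[OF k K_m1 x] by simp
  also have "\<dots> = scal (-1 * k) x" by simp
  also have "\<dots> = scal (-1) (scal k x)" using scal_multk[OF K_m1 k x] by simp
  also have "\<dots> = - scal k x" using scal_neg1[OF Xscal[OF k x]] .
  finally show ?thesis .
qed

lemma X_sum: "(\<And>i. i \<in> I \<Longrightarrow> f i \<in> X) \<Longrightarrow> sum f I \<in> X"
  by (rule sub_sum[OF subX])

lemma scal_sum: "k \<in> K \<Longrightarrow> (\<And>i. i \<in> I \<Longrightarrow> f i \<in> X) \<Longrightarrow> scal k (sum f I) = (\<Sum>i\<in>I. scal k (f i))"
proof (induction I rule: infinite_finite_induct)
  case (infinite A) then show ?case by (simp add: scal_k0)
next
  case empty then show ?case by (simp add: scal_k0)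
next
  case (insert x F) then show ?case by (simp add: scal_add X_sum)
qed

lemma scal_sumk: "x \<in> X \<Longrightarrow> (\<And>i. i \<in> I \<Longrightarrow> f i \<in> K) \<Longrightarrow> scal (sum f I) x = (\<Sum>i\<in>I. scal (f i) x)"
proof (induction I rule: infinite_finite_induct)
  case (infinite A) then show ?case by (simp add: scal_0k)
next
  case empty then show ?case by (simp add: scal_0k)
next
  case (insert y F) then show ?case by (simp add: scal_addk K_sum)
qed

lemma scal_times2:
  assumes k: "k \<in> K" and l: "l \<in> K" and x: "x \<in> X" and y: "y \<in> X"
  shows "scal k x * scal l y = scal (k * l) (x * y)"
proof -
  have "scal k x * scal l y = scal l (y * scal k x)"
    using scal_mult[OF l y Xscal[OF k x]] by (simp add: mult.commute)
  also have "y * scal k x = scal k x * y" by (simp add: mult.commute)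
  also have "\<dots> = scal k (x * y)" using scal_mult[OF k x y] by simp
  also have "scal l (scal k (x * y)) = scal (l * k) (x * y)" using scal_multk[OF l k Xmult[OF x y]] by simp
  finally show ?thesis by (simp add: mult.commute)
qed

section \<open>Evaluation of polynomials\<close>

lemma eval_in:
  assumes Z: "is_subalgebra K scal Z" and P: "P \<in> poly_n K n" and x: "\<And>i. i < n \<Longrightarrow> x i \<in> Z"
  shows "poly_eval scal n P x \<in> Z"
  unfolding poly_eval_mono
proof (rule sub_sum[OF Z])
  fix m assume "m \<in> {m. P m \<noteq> 0}"
  then have "good n m" "P m \<in> K" using P unfolding poly_n_iff by auto
  moreover have "mono n x m \<in> Z" by (rule mono_in[OF Z \<open>good n m\<close>]) (rule x)
  ultimately show "scal (P m) (mono n x m) \<in> Z"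
    using Z unfolding is_subalgebra_def by blast
qed

lemma eval_superset:
  assumes P: "P \<in> poly_n K n" and M: "finite M" "{m. P m \<noteq> 0} \<subseteq> M" "\<And>m. m \<in> M \<Longrightarrow> good n m"
    and x: "\<And>i. i < n \<Longrightarrow> x i \<in> X"
  shows "poly_eval scal n P x = (\<Sum>m\<in>M. scal (P m) (mono n x m))"
  unfolding poly_eval_mono
proof (rule sum.mono_neutral_left[OF M(1) M(2)])
  show "\<forall>i\<in>M - {m. P m \<noteq> 0}. scal (P i) (mono n x i) = 0"
    using mono_in[OF subX M(3) x] scal_0k by auto
qed

lemma padd_poly:
  assumes P: "P \<in> poly_n K n" and Q: "Q \<in> poly_n K n"
  shows "(\<lambda>m. P m + Q m) \<in> poly_n K n"
proof -
  have "{m. P m + Q m \<noteq> 0} \<subseteq> {m. P m \<noteq> 0} \<union> {m. Q m \<noteq> 0}" by auto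
  moreover have "finite ({m. P m \<noteq> 0} \<union> {m. Q m \<noteq> 0})" using P Q unfolding poly_n_iff by blast
  ultimately have "finite {m. P m + Q m \<noteq> 0}" by (rule finite_subset)
  moreover have "\<forall>m. P m + Q m \<in> K" using P Q K_add unfolding poly_n_iff by blast
  moreover have "\<forall>m. P m + Q m \<noteq> 0 \<longrightarrow> good n m"
  proof (intro allI impI)
    fix m assume "P m + Q m \<noteq> 0"
    then have "P m \<noteq> 0 \<or> Q m \<noteq> 0" by auto
    then show "good n m" using P Q unfolding poly_n_iff by blast
  qed
  ultimately show ?thesis unfolding poly_n_iff by blast
qed

lemma eval_add:
  assumes P: "P \<in> poly_n K n" and Q: "Q \<in> poly_n K n" and x: "\<And>i. i < n \<Longrightarrow> x i \<in> X"
  shows "poly_eval scal n (\<lambda>m. P m + Q m) x = poly_eval scal n P x + poly_eval scal n Q x"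
proof -
  let ?M = "{m. P m \<noteq> 0} \<union> {m. Q m \<noteq> 0}"
  have fin: "finite ?M" using P Q unfolding poly_n_iff by auto
  have g: "\<And>m. m \<in> ?M \<Longrightarrow> good n m" using P Q unfolding poly_n_iff by auto
  have s1: "{m. P m + Q m \<noteq> 0} \<subseteq> ?M" by auto
  have "poly_eval scal n (\<lambda>m. P m + Q m) x = (\<Sum>m\<in>?M. scal (P m + Q m) (mono n x m))"
    by (rule eval_superset[OF padd_poly[OF P Q] fin _ g x]) auto
  also have "\<dots> = (\<Sum>m\<in>?M. scal (P m) (mono n x m) + scal (Q m) (mono n x m))"
    by (rule sum.cong) (use P Q g mono_in[OF subX _ x] in \<open>auto simp: poly_n_iff intro!: scal_addk\<close>)
  also have "\<dots> = (\<Sum>m\<in>?M. scal (P m) (mono n x m)) + (\<Sum>m\<in>?M. scal (Q m) (mono n x m))"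
    by (rule sum.distrib)
  also have "\<dots> = poly_eval scal n P x + poly_eval scal n Q x"
    using eval_superset[OF P fin _ g x] eval_superset[OF Q fin _ g x] by auto
  finally show ?thesis .
qed

lemma pscal_poly:
  assumes k: "k \<in> K" and P: "P \<in> poly_n K n"
  shows "(\<lambda>m. k * P m) \<in> poly_n K n"
proof -
  have "{m. k * P m \<noteq> 0} \<subseteq> {m. P m \<noteq> 0}" by auto
  moreover have "finite {m. P m \<noteq> 0}" using P unfolding poly_n_iff by blast
  ultimately have "finite {m. k * P m \<noteq> 0}" by (rule finite_subset)
  moreover have "\<forall>m. k * P m \<in> K" using P k K_mult unfolding poly_n_iff by blast
  moreover have "\<forall>m. k * P m \<noteq> 0 \<longrightarrow> good n m" using P unfolding poly_n_iff by auto
  ultimately show ?thesis unfolding poly_n_iff by blast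
qed

lemma eval_scal:
  assumes k: "k \<in> K" and P: "P \<in> poly_n K n" and x: "\<And>i. i < n \<Longrightarrow> x i \<in> X"
  shows "poly_eval scal n (\<lambda>m. k * P m) x = scal k (poly_eval scal n P x)"
proof -
  let ?M = "{m. P m \<noteq> 0}"
  have fin: "finite ?M" using P unfolding poly_n_iff by auto
  have g: "\<And>m. m \<in> ?M \<Longrightarrow> good n m" using P unfolding poly_n_iff by auto
  have "poly_eval scal n (\<lambda>m. k * P m) x = (\<Sum>m\<in>?M. scal (k * P m) (mono n x m))"
    by (rule eval_superset[OF pscal_poly[OF k P] fin _ g x]) auto
  also have "\<dots> = (\<Sum>m\<in>?M. scal k (scal (P m) (mono n x m)))"
    by (rule sum.cong) (use P g mono_in[OF subX _ x] k in \<open>auto simp: poly_n_iff intro!: scal_multk\<close>)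
  also have "\<dots> = scal k (\<Sum>m\<in>?M. scal (P m) (mono n x m))"
    by (rule scal_sum[symmetric, OF k]) (use P g mono_in[OF subX _ x] in \<open>auto simp: poly_n_iff intro!: Xscal\<close>)
  also have "\<dots> = scal k (poly_eval scal n P x)" by (simp add: poly_eval_mono)
  finally show ?thesis .
qed

lemma pneg_poly: "P \<in> poly_n K n \<Longrightarrow> (\<lambda>m. - P m) \<in> poly_n K n"
  using pscal_poly[OF K_m1] by simp

lemma eval_neg:
  assumes P: "P \<in> poly_n K n" and x: "\<And>i. i < n \<Longrightarrow> x i \<in> X"
  shows "poly_eval scal n (\<lambda>m. - P m) x = - poly_eval scal n P x"
  using eval_scal[OF K_m1 P x] scal_neg1[OF eval_in[OF subX P x]] by simp

lemma eval_zero: "poly_eval scal n (\<lambda>_. 0) x = 0"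
  unfolding poly_eval_def by simp

lemma zero_poly: "(\<lambda>_. 0) \<in> poly_n K n"
  unfolding poly_n_iff using K_0 by auto

lemma pvar_poly: "i < n \<Longrightarrow> pvar i \<in> poly_n K n"
proof -
  assume i: "i < n"
  let ?d = "\<lambda>j. if j = i then 1 else (0::nat)"
  have s: "{m. pvar i m \<noteq> 0} = {?d}" unfolding pvar_def by auto
  have "good n ?d" unfolding good_def using i by (auto simp: fun_eq_iff)
  then show ?thesis unfolding poly_n_iff s using K_0 K_1 by (auto simp: pvar_def)
qed

lemma eval_pvar:
  assumes i: "i < n" and x: "\<And>i. i < n \<Longrightarrow> x i \<in> X"
  shows "poly_eval scal n (pvar i) x = x i"
proof -
  let ?d = "\<lambda>j. if j = i then 1 else (0::nat)"
  have s: "{m. pvar i m \<noteq> 0} = {?d}" unfolding pvar_def by auto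
  have "mono n x ?d = (\<Prod>j<n. if j = i then x j else 1)"
    unfolding mono_def by (rule prod.cong) auto
  also have "\<dots> = x i" using i by (simp add: prod.delta)
  finally show ?thesis unfolding poly_eval_mono s using scal_one[OF x[OF i]] by (simp add: pvar_def)
qed

lemma pmul_poly:
  assumes P: "P \<in> poly_n K n" and Q: "Q \<in> poly_n K n"
  shows "pmul P Q \<in> poly_n K n"
proof -
  let ?SP = "{m. P m \<noteq> 0}" and ?SQ = "{m. Q m \<noteq> 0}"
  let ?g = "\<lambda>p. madd (fst p) (snd p)"
  have fin: "finite (?SP \<times> ?SQ)" using P Q unfolding poly_n_iff by auto
  have sub: "{m. pmul P Q m \<noteq> 0} \<subseteq> ?g ` (?SP \<times> ?SQ)"
  proof
    fix m assume m: "m \<in> {m. pmul P Q m \<noteq> 0}"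
    have "{p \<in> ?SP \<times> ?SQ. ?g p = m} \<noteq> {}"
    proof
      assume e: "{p \<in> ?SP \<times> ?SQ. ?g p = m} = {}"
      have "pmul P Q m = 0" unfolding pmul_def e by (rule sum.empty)
      then show False using m by simp
    qed
    then show "m \<in> ?g ` (?SP \<times> ?SQ)" by blast
  qed
  have "finite {m. pmul P Q m \<noteq> 0}" by (rule finite_subset[OF sub finite_imageI[OF fin]])
  moreover have "\<forall>m. pmul P Q m \<in> K"
  proof
    fix m
    have KP: "\<And>m. P m \<in> K" and KQ: "\<And>m. Q m \<in> K" using P Q unfolding poly_n_iff by auto
    show "pmul P Q m \<in> K" unfolding pmul_def by (rule K_sum) (rule K_mult[OF KP KQ])
  qed
  moreover have "\<forall>m. pmul P Q m \<noteq> 0 \<longrightarrow> good n m"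
  proof (intro allI impI)
    fix m assume "pmul P Q m \<noteq> 0"
    then obtain p where p: "p \<in> ?SP \<times> ?SQ" "m = ?g p" using sub by blast
    then have "good n (fst p)" "good n (snd p)" using P Q unfolding poly_n_iff by auto
    then show "good n m" unfolding p(2) by (rule good_madd)
  qed
  ultimately show ?thesis unfolding poly_n_iff by blast
qed

lemma eval_mult:
  assumes P: "P \<in> poly_n K n" and Q: "Q \<in> poly_n K n" and x: "\<And>i. i < n \<Longrightarrow> x i \<in> X"
  shows "poly_eval scal n (pmul P Q) x = poly_eval scal n P x * poly_eval scal n Q x"
proof -
  define SP where "SP = {m. P m \<noteq> 0}"
  define SQ where "SQ = {m. Q m \<noteq> 0}"
  let ?g = "\<lambda>p. madd (fst p) (snd p)"
  define M where "M = ?g ` (SP \<times> SQ)"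
  have fSP: "finite SP" and fSQ: "finite SQ" using P Q unfolding poly_n_iff SP_def SQ_def by auto
  have gP: "\<And>m. m \<in> SP \<Longrightarrow> good n m" and gQ: "\<And>m. m \<in> SQ \<Longrightarrow> good n m"
    using P Q unfolding poly_n_iff SP_def SQ_def by auto
  have KP: "\<And>m. P m \<in> K" and KQ: "\<And>m. Q m \<in> K" using P Q unfolding poly_n_iff by auto
  have fM: "finite M" unfolding M_def using fSP fSQ by auto
  have gM: "\<And>m. m \<in> M \<Longrightarrow> good n m" unfolding M_def using gP gQ good_madd by auto
  have monoX: "\<And>m. good n m \<Longrightarrow> mono n x m \<in> X"
    by (rule mono_in[OF subX], assumption, rule x, assumption)
  have "poly_eval scal n P x * poly_eval scal n Q x
      = (\<Sum>m1\<in>SP. scal (P m1) (mono n x m1)) * (\<Sum>m2\<in>SQ. scal (Q m2) (mono n x m2))"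
    by (simp add: poly_eval_mono SP_def SQ_def)
  also have "\<dots> = (\<Sum>m1\<in>SP. \<Sum>m2\<in>SQ. scal (P m1) (mono n x m1) * scal (Q m2) (mono n x m2))"
    by (simp add: sum_product)
  also have "\<dots> = (\<Sum>m1\<in>SP. \<Sum>m2\<in>SQ. scal (P m1 * Q m2) (mono n x (madd m1 m2)))"
    by (intro sum.cong refl) (simp add: scal_times2 KP KQ monoX gP gQ mono_add)
  also have "\<dots> = (\<Sum>p\<in>SP \<times> SQ. scal (P (fst p) * Q (snd p)) (mono n x (?g p)))"
    by (simp add: sum.cartesian_product case_prod_beta)
  also have "\<dots> = (\<Sum>m\<in>M. \<Sum>p\<in>{p \<in> SP \<times> SQ. ?g p = m}. scal (P (fst p) * Q (snd p)) (mono n x (?g p)))"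
    by (rule sum.group[symmetric]) (use fSP fSQ fM in \<open>auto simp: M_def\<close>)
  also have "\<dots> = (\<Sum>m\<in>M. \<Sum>p\<in>{p \<in> SP \<times> SQ. ?g p = m}. scal (P (fst p) * Q (snd p)) (mono n x m))"
    by (intro sum.cong refl) auto
  also have "\<dots> = (\<Sum>m\<in>M. scal (pmul P Q m) (mono n x m))"
    unfolding pmul_def SP_def[symmetric] SQ_def[symmetric]
    by (intro sum.cong refl scal_sumk[symmetric]) (auto intro!: K_mult KP KQ monoX gM)
  also have "\<dots> = poly_eval scal n (pmul P Q) x"
  proof (rule eval_superset[symmetric, OF pmul_poly[OF P Q] fM _ gM x])
    show "{m. pmul P Q m \<noteq> 0} \<subseteq> M"
    proof
      fix m assume "m \<in> {m. pmul P Q m \<noteq> 0}"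
      have "{p \<in> SP \<times> SQ. ?g p = m} \<noteq> {}"
      proof
        assume e: "{p \<in> SP \<times> SQ. ?g p = m} = {}"
        have "pmul P Q m = 0" unfolding pmul_def SP_def[symmetric] SQ_def[symmetric] e by (rule sum.empty)
        then show False using \<open>m \<in> {m. pmul P Q m \<noteq> 0}\<close> by simp
      qed
      then show "m \<in> M" unfolding M_def by blast
    qed
  qed
  finally show ?thesis by simp
qed

end


context calg
begin

definition hom_on :: "'a set \<Rightarrow> ('a \<Rightarrow> 'a) \<Rightarrow> bool" where
  "hom_on D h \<longleftrightarrow> (\<forall>y\<in>D. h y \<in> X) \<and> (\<forall>y\<in>D. \<forall>z\<in>D. h (y + z) = h y + h z) \<and>
     (\<forall>y\<in>D. \<forall>z\<in>D. h (y * z) = h y * h z) \<and> (\<forall>y\<in>D. h (- y) = - h y) \<and>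
     (\<forall>k\<in>K. \<forall>y\<in>D. h (scal k y) = scal k (h y)) \<and> h 0 = 0"

lemma homD:
  assumes "hom_on D h"
  shows "\<And>y. y \<in> D \<Longrightarrow> h y \<in> X"
    and "\<And>y z. y \<in> D \<Longrightarrow> z \<in> D \<Longrightarrow> h (y + z) = h y + h z"
    and "\<And>y z. y \<in> D \<Longrightarrow> z \<in> D \<Longrightarrow> h (y * z) = h y * h z"
    and "\<And>y. y \<in> D \<Longrightarrow> h (- y) = - h y"
    and "\<And>k y. k \<in> K \<Longrightarrow> y \<in> D \<Longrightarrow> h (scal k y) = scal k (h y)"
    and "h 0 = 0"
  using assms unfolding hom_on_def by auto

lemma hom_sub: "D' \<subseteq> D \<Longrightarrow> hom_on D h \<Longrightarrow> hom_on D' h"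
  unfolding hom_on_def by blast

lemma hom_id: "D \<subseteq> X \<Longrightarrow> hom_on D (\<lambda>y. y)"
  unfolding hom_on_def by auto

lemma hom_zero: "hom_on D (\<lambda>_. 0)"
  unfolding hom_on_def using X0 scal_k0 by auto

lemma hom_comp:
  assumes h: "hom_on D h" and into: "\<And>y. y \<in> D \<Longrightarrow> h y \<in> D'" and g: "hom_on D' g"
  shows "hom_on D (\<lambda>y. g (h y))"
  unfolding hom_on_def using homD[OF h] homD[OF g] into by auto

lemma hom_sum:
  assumes h: "hom_on D h" and D: "is_subalgebra K scal D"
  shows "(\<And>i. i \<in> I \<Longrightarrow> f i \<in> D) \<Longrightarrow> h (sum f I) = (\<Sum>i\<in>I. h (f i))"
proof (induction I rule: infinite_finite_induct)
  case (infinite A) then show ?case using homD(6)[OF h] by simp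
next
  case empty then show ?case using homD(6)[OF h] by simp
next
  case (insert x F)
  have "sum f F \<in> D" by (rule sub_sum[OF D]) (use insert in auto)
  then show ?case using insert homD(2)[OF h] by simp
qed

lemma hom_pow:
  assumes h: "hom_on D h" and D: "is_subalgebra K scal D" and x: "x \<in> D"
  shows "k \<ge> 1 \<Longrightarrow> h (x ^ k) = h x ^ k"
proof (induction k)
  case 0 then show ?case by simp
next
  case (Suc k)
  show ?case
  proof (cases "k = 0")
    case True then show ?thesis by simp
  next
    case False
    then have "x ^ k \<in> D" using sub_pow[OF D x] by simp
    then show ?thesis using Suc False homD(3)[OF h x] by simp
  qed
qed

lemma hom_prod_ne:
  assumes h: "hom_on D h" and D: "is_subalgebra K scal D"
  shows "finite I \<Longrightarrow> I \<noteq> {} \<Longrightarrow> (\<And>i. i \<in> I \<Longrightarrow> f i \<in> D) \<Longrightarrow> h (prod f I) = (\<Prod>i\<in>I. h (f i))"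
proof (induction I rule: finite_ne_induct)
  case (singleton x) then show ?case by simp
next
  case (insert x F)
  have "prod f F \<in> D" by (rule sub_prod_ne[OF insert(1,2) D]) (use insert in auto)
  then show ?case using insert homD(3)[OF h] by simp
qed

lemma hom_mono:
  assumes h: "hom_on D h" and D: "is_subalgebra K scal D" and g: "good n m"
    and y: "\<And>i. i < n \<Longrightarrow> y i \<in> D"
  shows "h (mono n y m) = mono n (\<lambda>i. h (y i)) m"
proof -
  have "h (mono n y m) = h (\<Prod>i\<in>{i. i < n \<and> m i \<noteq> 0}. y i ^ m i)" by (subst mono_eq(1)[OF g]) (rule refl)
  also have "\<dots> = (\<Prod>i\<in>{i. i < n \<and> m i \<noteq> 0}. h (y i ^ m i))"
  proof (rule hom_prod_ne[OF h D _ mono_eq(2)[OF g]])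
    show "finite {i. i < n \<and> m i \<noteq> 0}" by simp
  next
    fix i assume "i \<in> {i. i < n \<and> m i \<noteq> 0}"
    then show "y i ^ m i \<in> D" using sub_pow[OF D y] by auto
  qed
  also have "\<dots> = (\<Prod>i\<in>{i. i < n \<and> m i \<noteq> 0}. h (y i) ^ m i)"
  proof (rule prod.cong[OF refl])
    fix i assume "i \<in> {i. i < n \<and> m i \<noteq> 0}"
    then show "h (y i ^ m i) = h (y i) ^ m i" using hom_pow[OF h D y] by auto
  qed
  also have "\<dots> = mono n (\<lambda>i. h (y i)) m" by (subst mono_eq(1)[OF g]) (rule refl)
  finally show ?thesis .
qed

lemma hom_eval:
  assumes h: "hom_on D h" and D: "is_subalgebra K scal D" and P: "P \<in> poly_n K n"
    and y: "\<And>i. i < n \<Longrightarrow> y i \<in> D"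
  shows "h (poly_eval scal n P y) = poly_eval scal n P (\<lambda>i. h (y i))"
proof -
  have gm: "\<And>m. m \<in> {m. P m \<noteq> 0} \<Longrightarrow> good n m \<and> P m \<in> K" using P unfolding poly_n_iff by auto
  have md: "\<And>m. m \<in> {m. P m \<noteq> 0} \<Longrightarrow> mono n y m \<in> D"
    using gm by (metis mono_in[OF D] y)
  have "h (poly_eval scal n P y) = (\<Sum>m\<in>{m. P m \<noteq> 0}. h (scal (P m) (mono n y m)))"
    unfolding poly_eval_mono
    by (rule hom_sum[OF h D]) (use md gm D in \<open>auto simp: is_subalgebra_def\<close>)
  also have "\<dots> = (\<Sum>m\<in>{m. P m \<noteq> 0}. scal (P m) (mono n (\<lambda>i. h (y i)) m))"
  proof (rule sum.cong[OF refl])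
    fix m assume m: "m \<in> {m. P m \<noteq> 0}"
    show "h (scal (P m) (mono n y m)) = scal (P m) (mono n (\<lambda>i. h (y i)) m)"
      using homD(5)[OF h _ md[OF m], of "P m"] gm[OF m] hom_mono[OF h D _ y] by auto
  qed
  also have "\<dots> = poly_eval scal n P (\<lambda>i. h (y i))" by (simp add: poly_eval_mono)
  finally show ?thesis .
qed

lemma hom_equal:
  assumes h1: "hom_on D h1" and h2: "hom_on D h2" and TD: "gen K scal T \<subseteq> D"
    and eq: "\<And>s. s \<in> T \<Longrightarrow> h1 s = h2 s"
  shows "\<And>y. y \<in> gen K scal T \<Longrightarrow> h1 y = h2 y"
proof -
  let ?E = "{y \<in> gen K scal T. h1 y = h2 y}"
  have "is_subalgebra K scal ?E"
    unfolding is_subalgebra_def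
  proof (intro conjI ballI)
    show "0 \<in> ?E" using homD(6)[OF h1] homD(6)[OF h2] by (simp add: gen_0)
  next
    fix x y assume x: "x \<in> ?E" and y: "y \<in> ?E"
    then have "x \<in> D" "y \<in> D" using TD by auto
    then show "x + y \<in> ?E" using x y homD(2)[OF h1] homD(2)[OF h2] by (simp add: gen_add)
  next
    fix x y assume x: "x \<in> ?E" and y: "y \<in> ?E"
    then have "x \<in> D" "y \<in> D" using TD by auto
    then show "x * y \<in> ?E" using x y homD(3)[OF h1] homD(3)[OF h2] by (simp add: gen_mult)
  next
    fix x assume x: "x \<in> ?E"
    then have "x \<in> D" using TD by auto
    then show "- x \<in> ?E" using x homD(4)[OF h1] homD(4)[OF h2] by (simp add: gen_neg)
  next
    fix k x assume k: "k \<in> K" and x: "x \<in> ?E"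
    then have "x \<in> D" using TD by auto
    then show "scal k x \<in> ?E" using k x homD(5)[OF h1] homD(5)[OF h2] by (simp add: gen_scal)
  qed
  moreover have "T \<subseteq> ?E" using eq gen_incl by blast
  ultimately have "gen K scal T \<subseteq> ?E" by (rule gen_least[rotated])
  then show "\<And>y. y \<in> gen K scal T \<Longrightarrow> h1 y = h2 y" by blast
qed

lemma hom_into:
  assumes h: "hom_on D h" and TD: "gen K scal T \<subseteq> D"
    and into: "\<And>s. s \<in> T \<Longrightarrow> h s \<in> gen K scal T'"
  shows "\<And>y. y \<in> gen K scal T \<Longrightarrow> h y \<in> gen K scal T'"
proof -
  let ?E = "{y \<in> gen K scal T. h y \<in> gen K scal T'}"
  have "is_subalgebra K scal ?E"
    unfolding is_subalgebra_def
  proof (intro conjI ballI)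
    show "0 \<in> ?E" using homD(6)[OF h] by (simp add: gen_0)
  next
    fix x y assume x: "x \<in> ?E" and y: "y \<in> ?E"
    then have "x \<in> D" "y \<in> D" using TD by auto
    then show "x + y \<in> ?E" using x y homD(2)[OF h] by (simp add: gen_add)
  next
    fix x y assume x: "x \<in> ?E" and y: "y \<in> ?E"
    then have "x \<in> D" "y \<in> D" using TD by auto
    then show "x * y \<in> ?E" using x y homD(3)[OF h] by (simp add: gen_mult)
  next
    fix x assume x: "x \<in> ?E"
    then have "x \<in> D" using TD by auto
    then show "- x \<in> ?E" using x homD(4)[OF h] by (simp add: gen_neg)
  next
    fix k x assume k: "k \<in> K" and x: "x \<in> ?E"
    then have "x \<in> D" using TD by auto
    then show "scal k x \<in> ?E" using k x homD(5)[OF h] by (simp add: gen_scal)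
  qed
  moreover have "T \<subseteq> ?E" using into gen_incl by blast
  ultimately have "gen K scal T \<subseteq> ?E" by (rule gen_least[rotated])
  then show "\<And>y. y \<in> gen K scal T \<Longrightarrow> h y \<in> gen K scal T'" by blast
qed

lemma hom_image:
  assumes h: "hom_on D h" and TD: "gen K scal T \<subseteq> D"
  shows "gen K scal (h ` T) \<subseteq> h ` gen K scal T"
proof (rule gen_least)
  show "h ` T \<subseteq> h ` gen K scal T" using gen_incl by blast
  show "is_subalgebra K scal (h ` gen K scal T)"
    unfolding is_subalgebra_def
  proof (intro conjI ballI)
    show "0 \<in> h ` gen K scal T" using homD(6)[OF h] gen_0 by (metis image_eqI)
  next
    fix x y assume "x \<in> h ` gen K scal T" "y \<in> h ` gen K scal T"
    then obtain a b where ab: "a \<in> gen K scal T" "b \<in> gen K scal T" "x = h a" "y = h b" by blast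
    then have "h (a + b) = x + y" using homD(2)[OF h] TD by auto
    then show "x + y \<in> h ` gen K scal T" using gen_add[OF ab(1,2)] by (metis image_eqI)
  next
    fix x y assume "x \<in> h ` gen K scal T" "y \<in> h ` gen K scal T"
    then obtain a b where ab: "a \<in> gen K scal T" "b \<in> gen K scal T" "x = h a" "y = h b" by blast
    then have "h (a * b) = x * y" using homD(3)[OF h] TD by auto
    then show "x * y \<in> h ` gen K scal T" using gen_mult[OF ab(1,2)] by (metis image_eqI)
  next
    fix x assume "x \<in> h ` gen K scal T"
    then obtain a where ab: "a \<in> gen K scal T" "x = h a" by blast
    then have "h (- a) = - x" using homD(4)[OF h] TD by auto
    then show "- x \<in> h ` gen K scal T" using gen_neg[OF ab(1)] by (metis image_eqI)
  next
    fix k x assume k: "k \<in> K" and "x \<in> h ` gen K scal T"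
    then obtain a where ab: "a \<in> gen K scal T" "x = h a" by blast
    then have "h (scal k a) = scal k x" using homD(5)[OF h k] TD by auto
    then show "scal k x \<in> h ` gen K scal T" using gen_scal[OF k ab(1)] by (metis image_eqI)
  qed
qed

end

locale fgen = calg +
  fixes A
  assumes sfg: "is_SFG K scal A" and AX: "A \<subseteq> X"
begin

lemma sfgD:
  assumes "P \<in> poly_n K n" "P \<noteq> (\<lambda>_. 0)" "\<forall>i<n. x i \<in> A" "inj_on x {..<n}"
  shows "poly_eval scal n P x \<noteq> 0"
proof -
  have "\<forall>P\<in>poly_n K n. \<forall>x. P \<noteq> (\<lambda>_. 0) \<and> (\<forall>i<n. x i \<in> A) \<and> inj_on x {..<n} \<longrightarrow> poly_eval scal n P x \<noteq> 0"
    using sfg unfolding is_SFG_def by (rule spec)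
  then show ?thesis using assms by blast
qed

lemma univ_fin:
  assumes S: "finite S" "S \<subseteq> A" and u: "\<And>s. s \<in> S \<Longrightarrow> u s \<in> X"
  shows "\<exists>h. hom_on (gen K scal S) h \<and> (\<forall>s\<in>S. h s = u s)"
proof -
  define n where "n = card S"
  obtain e where e: "bij_betw e {..<n} S"
    using ex_bij_betw_nat_finite[OF S(1)] unfolding n_def atLeast0LessThan by blast
  have eS: "\<And>i. i < n \<Longrightarrow> e i \<in> S" using e unfolding bij_betw_def by auto
  have einj: "inj_on e {..<n}" using e unfolding bij_betw_def by auto
  have eX: "\<And>i. i < n \<Longrightarrow> e i \<in> X" using eS S(2) AX by blast
  have ueX: "\<And>i. i < n \<Longrightarrow> u (e i) \<in> X" using eS u by blast
  have eA: "\<And>i. i < n \<Longrightarrow> e i \<in> A" using eS S(2) by blast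
  define R where "R = {y. \<exists>P\<in>poly_n K n. y = poly_eval scal n P e}"
  have R_sub: "is_subalgebra K scal R"
    unfolding is_subalgebra_def
  proof (intro conjI ballI)
    have "0 = poly_eval scal n (\<lambda>_. 0) e" by (simp add: eval_zero)
    then show "0 \<in> R" unfolding R_def using zero_poly by blast
  next
    fix x y assume "x \<in> R" "y \<in> R"
    then obtain P Q where PQ: "P \<in> poly_n K n" "Q \<in> poly_n K n" "x = poly_eval scal n P e" "y = poly_eval scal n Q e"
      unfolding R_def by blast
    have "x + y = poly_eval scal n (\<lambda>m. P m + Q m) e" using eval_add[where x=e, OF PQ(1,2) eX] PQ(3,4) by simp
    then show "x + y \<in> R" unfolding R_def using padd_poly[OF PQ(1,2)] by blast
  next
    fix x y assume "x \<in> R" "y \<in> R"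
    then obtain P Q where PQ: "P \<in> poly_n K n" "Q \<in> poly_n K n" "x = poly_eval scal n P e" "y = poly_eval scal n Q e"
      unfolding R_def by blast
    have "x * y = poly_eval scal n (pmul P Q) e" using eval_mult[where x=e, OF PQ(1,2) eX] PQ(3,4) by simp
    then show "x * y \<in> R" unfolding R_def using pmul_poly[OF PQ(1,2)] by blast
  next
    fix x assume "x \<in> R"
    then obtain P where PQ: "P \<in> poly_n K n" "x = poly_eval scal n P e" unfolding R_def by blast
    have "- x = poly_eval scal n (\<lambda>m. - P m) e" using eval_neg[where x=e, OF PQ(1) eX] PQ(2) by simp
    then show "- x \<in> R" unfolding R_def using pneg_poly[OF PQ(1)] by blast
  next
    fix k x assume k: "k \<in> K" and "x \<in> R"
    then obtain P where PQ: "P \<in> poly_n K n" "x = poly_eval scal n P e" unfolding R_def by blast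
    have "scal k x = poly_eval scal n (\<lambda>m. k * P m) e" using eval_scal[where x=e, OF k PQ(1) eX] PQ(2) by simp
    then show "scal k x \<in> R" unfolding R_def using pscal_poly[OF k PQ(1)] by blast
  qed
  have SR: "S \<subseteq> R"
  proof
    fix s assume "s \<in> S"
    then obtain i where i: "i < n" "s = e i" using e unfolding bij_betw_def by auto
    have "s = poly_eval scal n (pvar i) e" using eval_pvar[where x=e, OF i(1) eX] i(2) by simp
    then show "s \<in> R" unfolding R_def using pvar_poly[OF i(1)] by blast
  qed
  have genR: "gen K scal S \<subseteq> R" by (rule gen_least[OF SR R_sub])
  have uniq: "P = Q" if P: "P \<in> poly_n K n" and Q: "Q \<in> poly_n K n"
    and eq: "poly_eval scal n P e = poly_eval scal n Q e" for P Q
  proof -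
    define D where "D = (\<lambda>m. P m + - Q m)"
    have D: "D \<in> poly_n K n" unfolding D_def by (rule padd_poly[OF P pneg_poly[OF Q]])
    have "poly_eval scal n D e = poly_eval scal n P e + - poly_eval scal n Q e"
      unfolding D_def using eval_add[OF P pneg_poly[OF Q] eX] eval_neg[where x=e, OF Q eX] by simp
    then have z: "poly_eval scal n D e = 0" using eq by simp
    have "D = (\<lambda>_. 0)"
    proof (rule ccontr)
      assume "D \<noteq> (\<lambda>_. 0)"
      then have "poly_eval scal n D e \<noteq> 0"
        by (rule sfgD[OF D _ _ einj]) (use eA in auto)
      then show False using z by simp
    qed
    then show "P = Q" unfolding D_def by (simp add: fun_eq_iff)
  qed
  define rep where "rep y = (SOME P. P \<in> poly_n K n \<and> y = poly_eval scal n P e)" for y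
  define h where "h y = poly_eval scal n (rep y) (\<lambda>i. u (e i))" for y
  have key: "h y = poly_eval scal n P (\<lambda>i. u (e i))" if P: "P \<in> poly_n K n" and y: "y = poly_eval scal n P e" for y P
  proof -
    have ex: "P \<in> poly_n K n \<and> y = poly_eval scal n P e" using P y by (rule conjI)
    have r: "rep y \<in> poly_n K n \<and> y = poly_eval scal n (rep y) e"
      unfolding rep_def by (rule someI[of _ P]) (rule ex)
    have "rep y = P"
    proof (rule uniq)
      show "rep y \<in> poly_n K n" using r by (rule conjunct1)
      show "P \<in> poly_n K n" by (rule P)
      show "poly_eval scal n (rep y) e = poly_eval scal n P e" using r y by simp
    qed
    then show ?thesis unfolding h_def by simp
  qed
  have repr: "\<exists>P\<in>poly_n K n. y = poly_eval scal n P e" if "y \<in> gen K scal S" for y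
  proof -
    have "y \<in> R" using genR that by (rule subsetD)
    then show ?thesis unfolding R_def by (rule CollectD)
  qed
  have "hom_on (gen K scal S) h"
    unfolding hom_on_def
  proof (intro conjI ballI)
    fix y assume "y \<in> gen K scal S"
    then obtain P where P: "P \<in> poly_n K n" "y = poly_eval scal n P e" using repr by blast
    show "h y \<in> X" using key[OF P] eval_in[where x="\<lambda>i. u (e i)", OF subX P(1) ueX] by simp
  next
    fix y z assume "y \<in> gen K scal S" "z \<in> gen K scal S"
    then obtain P Q where P: "P \<in> poly_n K n" "y = poly_eval scal n P e"
      and Q: "Q \<in> poly_n K n" "z = poly_eval scal n Q e" using repr[of y] repr[of z] by blast
    have "y + z = poly_eval scal n (\<lambda>m. P m + Q m) e" using eval_add[where x=e, OF P(1) Q(1) eX] P Q by simp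
    then have "h (y + z) = poly_eval scal n (\<lambda>m. P m + Q m) (\<lambda>i. u (e i))" by (rule key[OF padd_poly[OF P(1) Q(1)]])
    also have "\<dots> = h y + h z" using eval_add[where x="\<lambda>i. u (e i)", OF P(1) Q(1) ueX] key[OF P] key[OF Q] by simp
    finally show "h (y + z) = h y + h z" .
  next
    fix y z assume "y \<in> gen K scal S" "z \<in> gen K scal S"
    then obtain P Q where P: "P \<in> poly_n K n" "y = poly_eval scal n P e"
      and Q: "Q \<in> poly_n K n" "z = poly_eval scal n Q e" using repr[of y] repr[of z] by blast
    have "y * z = poly_eval scal n (pmul P Q) e" using eval_mult[where x=e, OF P(1) Q(1) eX] P Q by simp
    then have "h (y * z) = poly_eval scal n (pmul P Q) (\<lambda>i. u (e i))" by (rule key[OF pmul_poly[OF P(1) Q(1)]])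
    also have "\<dots> = h y * h z" using eval_mult[where x="\<lambda>i. u (e i)", OF P(1) Q(1) ueX] key[OF P] key[OF Q] by simp
    finally show "h (y * z) = h y * h z" .
  next
    fix y assume "y \<in> gen K scal S"
    then obtain P where P: "P \<in> poly_n K n" "y = poly_eval scal n P e" using repr by blast
    have "- y = poly_eval scal n (\<lambda>m. - P m) e" using eval_neg[where x=e, OF P(1) eX] P by simp
    then have "h (- y) = poly_eval scal n (\<lambda>m. - P m) (\<lambda>i. u (e i))" by (rule key[OF pneg_poly[OF P(1)]])
    also have "\<dots> = - h y" using eval_neg[where x="\<lambda>i. u (e i)", OF P(1) ueX] key[OF P] by simp
    finally show "h (- y) = - h y" .
  next
    fix k y assume k: "k \<in> K" and "y \<in> gen K scal S"
    then obtain P where P: "P \<in> poly_n K n" "y = poly_eval scal n P e" using repr by blast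
    have "scal k y = poly_eval scal n (\<lambda>m. k * P m) e" using eval_scal[where x=e, OF k P(1) eX] P by simp
    then have "h (scal k y) = poly_eval scal n (\<lambda>m. k * P m) (\<lambda>i. u (e i))" by (rule key[OF pscal_poly[OF k P(1)]])
    also have "\<dots> = scal k (h y)" using eval_scal[where x="\<lambda>i. u (e i)", OF k P(1) ueX] key[OF P] by simp
    finally show "h (scal k y) = scal k (h y)" .
  next
    have "0 = poly_eval scal n (\<lambda>_. 0) e" using eval_zero by simp
    then have "h 0 = poly_eval scal n (\<lambda>_. 0) (\<lambda>i. u (e i))" by (rule key[OF zero_poly])
    then show "h 0 = 0" using eval_zero by simp
  qed
  moreover have "\<forall>s\<in>S. h s = u s"
  proof
    fix s assume "s \<in> S"
    then obtain i where i: "i < n" "s = e i" using e unfolding bij_betw_def by auto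
    have "s = poly_eval scal n (pvar i) e" using eval_pvar[where x=e, OF i(1) eX] i by simp
    then have "h s = poly_eval scal n (pvar i) (\<lambda>i. u (e i))" by (rule key[OF pvar_poly[OF i(1)]])
    then show "h s = u s" using eval_pvar[where x="\<lambda>i. u (e i)", OF i(1) ueX] i by simp
  qed
  ultimately show ?thesis by blast
qed

end


locale mainl = fgen K scal X A
  for K and scal :: "complex \<Rightarrow> 'a::{comm_ring_1,topological_space} \<Rightarrow> 'a" and X A +
  fixes B C :: "'a set" and Bs :: "'a set set" and f :: "'a \<Rightarrow> 'a set"
  assumes top: "is_comm_top_algebra K scal X"
    and XA: "X = gen K scal A"
    and part: "B \<union> C = A" "B \<inter> C = {}"
    and base: "is_base_of X Bs" and Bsf: "Bs \<subseteq> f ` C"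
begin

lemma cont_add: "continuous_on (X \<times> X) (\<lambda>(x, y). x + y)"
  using top unfolding is_comm_top_algebra_def by blast
lemma cont_mult: "continuous_on (X \<times> X) (\<lambda>(x, y). x * y)"
  using top unfolding is_comm_top_algebra_def by blast
lemma cont_scal: "continuous_on (K \<times> X) (\<lambda>(k, x). scal k x)"
  using top unfolding is_comm_top_algebra_def by blast

lemma closure_binop:
  assumes c: "continuous_on (X \<times> X) (\<lambda>(x, y). g x y)" and gX: "\<And>x y. x \<in> X \<Longrightarrow> y \<in> X \<Longrightarrow> g x y \<in> X"
    and ZX: "Z \<subseteq> X" and gZ: "\<And>x y. x \<in> Z \<Longrightarrow> y \<in> Z \<Longrightarrow> g x y \<in> Z"
    and x: "x \<in> top_of_set X closure_of Z" and y: "y \<in> top_of_set X closure_of Z"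
  shows "g x y \<in> top_of_set X closure_of Z"
proof -
  have cm: "continuous_map (prod_topology (top_of_set X) (top_of_set X)) (top_of_set X) (\<lambda>(x, y). g x y)"
    unfolding prod_topology_subtopology_eu continuous_map_subtopology_eu using c gX by auto
  have "(\<lambda>(x, y). g x y) ` (prod_topology (top_of_set X) (top_of_set X) closure_of (Z \<times> Z))
        \<subseteq> top_of_set X closure_of ((\<lambda>(x, y). g x y) ` (Z \<times> Z))"
    by (rule continuous_map_image_closure_subset[OF cm])
  also have "\<dots> \<subseteq> top_of_set X closure_of Z"
    by (rule closure_of_mono) (use gZ in auto)
  finally have sub: "(\<lambda>(x, y). g x y) ` ((top_of_set X closure_of Z) \<times> (top_of_set X closure_of Z)) \<subseteq> top_of_set X closure_of Z"
    unfolding closure_of_Times .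
  have "(x, y) \<in> (top_of_set X closure_of Z) \<times> (top_of_set X closure_of Z)" using x y by blast
  then show ?thesis using sub by blast
qed

lemma cont_scal_k: "k \<in> K \<Longrightarrow> continuous_on X (\<lambda>x. scal k x)"
proof -
  assume k: "k \<in> K"
  have "continuous_on X (\<lambda>x. (\<lambda>(k, x). scal k x) (k, x))"
    by (rule continuous_on_compose2[OF cont_scal]) (auto intro!: continuous_intros simp: k)
  then show ?thesis by simp
qed

lemma closure_scal:
  assumes k: "k \<in> K" and ZX: "Z \<subseteq> X" and gZ: "\<And>x. x \<in> Z \<Longrightarrow> scal k x \<in> Z"
    and x: "x \<in> top_of_set X closure_of Z"
  shows "scal k x \<in> top_of_set X closure_of Z"
proof -
  have cm: "continuous_map (top_of_set X) (top_of_set X) (\<lambda>x. scal k x)"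
    unfolding continuous_map_subtopology_eu using cont_scal_k[OF k] Xscal[OF k] by auto
  have "(\<lambda>x. scal k x) ` (top_of_set X closure_of Z) \<subseteq> top_of_set X closure_of ((\<lambda>x. scal k x) ` Z)"
    by (rule continuous_map_image_closure_subset[OF cm])
  also have "\<dots> \<subseteq> top_of_set X closure_of Z"
    by (rule closure_of_mono) (use gZ in auto)
  finally show ?thesis using x by blast
qed

lemma closure_subalg:
  assumes Z: "is_subalgebra K scal Z" and ZX: "Z \<subseteq> X"
  shows "is_subalgebra K scal (top_of_set X closure_of Z)"
proof -
  let ?cl = "top_of_set X closure_of Z"
  have clX: "?cl \<subseteq> X" using closure_of_subset_topspace[of "top_of_set X" Z] by simp
  have Zcl: "Z \<subseteq> ?cl" using closure_of_subset[of Z "top_of_set X"] ZX by simp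
  show ?thesis
    unfolding is_subalgebra_def
  proof (intro conjI ballI)
    show "0 \<in> ?cl" using Zcl Z unfolding is_subalgebra_def by blast
  next
    fix x y assume "x \<in> ?cl" "y \<in> ?cl"
    then show "x + y \<in> ?cl"
      using closure_binop[where g="\<lambda>x y. x + y", OF cont_add Xadd ZX] Z unfolding is_subalgebra_def by blast
  next
    fix x y assume "x \<in> ?cl" "y \<in> ?cl"
    then show "x * y \<in> ?cl"
      using closure_binop[where g="\<lambda>x y. x * y", OF cont_mult Xmult ZX] Z unfolding is_subalgebra_def by blast
  next
    fix x assume x: "x \<in> ?cl"
    have "scal (-1) x \<in> ?cl"
      by (rule closure_scal[OF K_m1 ZX _ x]) (use Z in \<open>auto simp: is_subalgebra_def intro: K_m1\<close>)
    then show "- x \<in> ?cl" using scal_neg1 x clX by auto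
  next
    fix k x assume k: "k \<in> K" and x: "x \<in> ?cl"
    show "scal k x \<in> ?cl"
      by (rule closure_scal[OF k ZX _ x]) (use Z k in \<open>auto simp: is_subalgebra_def\<close>)
  qed
qed

lemma perturb:
  assumes V: "openin (top_of_set X) V" and b: "b \<in> V" and c: "c \<in> X"
  shows "\<exists>t::real. t \<noteq> 0 \<and> scal (complex_of_real t) c + b \<in> V"
proof -
  obtain T where T: "open T" "V = X \<inter> T" using V unfolding openin_open by blast
  have bX: "b \<in> X" using b T by blast
  define g where "g t = scal (complex_of_real t) c + b" for t :: real
  have c1: "continuous_on UNIV (\<lambda>t::real. (\<lambda>(k, x). scal k x) (complex_of_real t, c))"
    by (rule continuous_on_compose2[OF cont_scal]) (auto intro!: continuous_intros simp: K_real c)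
  have c2: "continuous_on UNIV (\<lambda>t::real. (\<lambda>(x, y). x + y) (scal (complex_of_real t) c, b))"
    by (rule continuous_on_compose2[OF cont_add]) (use c1 in \<open>auto intro!: continuous_intros simp: Xscal K_real c bX\<close>)
  then have cg: "continuous_on UNIV g" unfolding g_def by simp
  have "open (g -` T \<inter> UNIV)" using cg T(1) continuous_on_open_vimage[of UNIV g] by auto
  then have o: "open (g -` T)" by simp
  have "g 0 = b" unfolding g_def using scal_0k[OF c] by simp
  then have "0 \<in> g -` T" using b T by auto
  then obtain e where e: "e > 0" "ball 0 e \<subseteq> g -` T" using o open_contains_ball by blast
  define t where "t = e / 2"
  have "t \<in> ball 0 e" unfolding t_def using e by simp
  then have "g t \<in> T" using e by blast
  moreover have "g t \<in> X" unfolding g_def using Xadd[OF Xscal[OF K_real c] bX] .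
  ultimately have "g t \<in> V" using T by blast
  moreover have "t \<noteq> 0" unfolding t_def using e by simp
  ultimately show ?thesis unfolding g_def by blast
qed

end


context mainl
begin

definition act :: "'a \<Rightarrow> bool" where
  "act c \<longleftrightarrow> f c \<in> Bs \<and> f c \<inter> B \<noteq> {}"

definition bb :: "'a \<Rightarrow> 'a" where
  "bb c = (if act c then (SOME b. b \<in> f c \<inter> B) else 0)"

definition tt :: "'a \<Rightarrow> real" where
  "tt c = (if act c then (SOME t. t \<noteq> 0 \<and> scal (complex_of_real t) c + bb c \<in> f c) else 1)"

definition phi :: "'a \<Rightarrow> 'a" where
  "phi c = scal (complex_of_real (tt c)) c + bb c"

definition psi :: "'a \<Rightarrow> 'a" where
  "psi c = scal (complex_of_real (1 / tt c)) (c - bb c)"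

lemma AX': "A \<subseteq> X" by (rule AX)
lemma BX: "B \<subseteq> X" using part AX by blast
lemma CX: "C \<subseteq> X" using part AX by blast
lemma BA: "B \<subseteq> A" using part by blast
lemma CA: "C \<subseteq> A" using part by blast

lemma bb_act:
  assumes "act c" shows "bb c \<in> f c \<inter> B"
proof -
  have "\<exists>b. b \<in> f c \<inter> B" using assms unfolding act_def by blast
  then have "(SOME b. b \<in> f c \<inter> B) \<in> f c \<inter> B" by (rule someI_ex)
  then show ?thesis using assms unfolding bb_def by simp
qed

lemma bb_cases: "bb c \<in> B \<or> bb c = 0"
proof (cases "act c")
  case True then show ?thesis using bb_act by blast
next
  case False then show ?thesis unfolding bb_def by simp
qed

lemma bbX: "bb c \<in> X"
proof -
  have "bb c \<in> B \<or> bb c = 0" by (rule bb_cases)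
  then show ?thesis using BX X0 by auto
qed

lemma tt_act: "c \<in> C \<Longrightarrow> act c \<Longrightarrow> tt c \<noteq> 0 \<and> phi c \<in> f c"
proof -
  assume c: "c \<in> C" and a: "act c"
  have V: "openin (top_of_set X) (f c)" using a base unfolding act_def is_base_of_def by blast
  have "\<exists>t::real. t \<noteq> 0 \<and> scal (complex_of_real t) c + bb c \<in> f c"
    by (rule perturb[OF V]) (use bb_act[OF a] c CX in auto)
  then have "(SOME t. t \<noteq> 0 \<and> scal (complex_of_real t) c + bb c \<in> f c) \<noteq> 0 \<and>
     scal (complex_of_real (SOME t. t \<noteq> 0 \<and> scal (complex_of_real t) c + bb c \<in> f c)) c + bb c \<in> f c"
    by (rule someI_ex)
  then have "tt c \<noteq> 0 \<and> scal (complex_of_real (tt c)) c + bb c \<in> f c"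
    unfolding tt_def using a by simp
  then show ?thesis unfolding phi_def .
qed

lemma tt_nz: "c \<in> C \<Longrightarrow> tt c \<noteq> 0"
proof (cases "act c")
  case True
  assume "c \<in> C" then show ?thesis using tt_act True by blast
next
  case False then show ?thesis unfolding tt_def by simp
qed

lemma phiX: "c \<in> C \<Longrightarrow> phi c \<in> X"
  unfolding phi_def using CX by (auto intro!: Xadd Xscal K_real bbX)

lemma psiX: "c \<in> C \<Longrightarrow> psi c \<in> X"
  unfolding psi_def by (rule Xscal[OF K_real Xdiff[OF _ bbX]]) (use CX in auto)

lemma scal_inv:
  assumes "t \<noteq> 0" "w \<in> X"
  shows "scal (complex_of_real t) (scal (complex_of_real (1 / t)) w) = w"
    and "scal (complex_of_real (1 / t)) (scal (complex_of_real t) w) = w"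
proof -
  have e1: "complex_of_real t * complex_of_real (1 / t) = 1" using assms(1)
    by (simp flip: of_real_mult)
  have e2: "complex_of_real (1 / t) * complex_of_real t = 1" using assms(1)
    by (simp flip: of_real_mult)
  have "scal (complex_of_real t) (scal (complex_of_real (1 / t)) w) = scal (complex_of_real t * complex_of_real (1 / t)) w"
    by (rule scal_multk[OF K_real K_real assms(2), symmetric])
  also have "\<dots> = w" unfolding e1 by (rule scal_one[OF assms(2)])
  finally show "scal (complex_of_real t) (scal (complex_of_real (1 / t)) w) = w" .
  have "scal (complex_of_real (1 / t)) (scal (complex_of_real t) w) = scal (complex_of_real (1 / t) * complex_of_real t) w"
    by (rule scal_multk[OF K_real K_real assms(2), symmetric])
  also have "\<dots> = w" unfolding e2 by (rule scal_one[OF assms(2)])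
  finally show "scal (complex_of_real (1 / t)) (scal (complex_of_real t) w) = w" .
qed

definition closedS :: "'a set \<Rightarrow> bool" where
  "closedS S \<longleftrightarrow> finite S \<and> S \<subseteq> A \<and> (\<forall>c\<in>S \<inter> C. bb c \<in> S \<or> bb c = 0)"

lemma closedS_mk:
  assumes T: "finite T" "T \<subseteq> C" and B0: "finite B0" "B0 \<subseteq> B"
  shows "closedS (T \<union> (bb ` T \<inter> B) \<union> B0)" and "(T \<union> (bb ` T \<inter> B) \<union> B0) \<inter> C = T"
    and "(T \<union> (bb ` T \<inter> B) \<union> B0) \<inter> B \<supseteq> B0"
proof -
  show eqC: "(T \<union> (bb ` T \<inter> B) \<union> B0) \<inter> C = T" using T B0 part by blast
  show "(T \<union> (bb ` T \<inter> B) \<union> B0) \<inter> B \<supseteq> B0" using B0 by blast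
  have "\<forall>c\<in>(T \<union> (bb ` T \<inter> B) \<union> B0) \<inter> C. bb c \<in> T \<union> (bb ` T \<inter> B) \<union> B0 \<or> bb c = 0"
    unfolding eqC using bb_cases by blast
  then show "closedS (T \<union> (bb ` T \<inter> B) \<union> B0)"
    unfolding closedS_def using T B0 CA BA by auto
qed

lemma genX: "gen K scal S \<subseteq> X" if "S \<subseteq> X" for S
  using gen_least[OF that subX] .

lemma gen_subS: "S \<subseteq> T \<Longrightarrow> y \<in> gen K scal S \<Longrightarrow> y \<in> gen K scal T"
  using gen_mono by blast

lemma inv_pair:
  assumes S: "closedS S"
  shows "\<exists>H1 H2. hom_on (gen K scal S) H1 \<and> hom_on (gen K scal S) H2 \<and> (\<forall>c\<in>S \<inter> C. H1 c = phi c)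
     \<and> (\<forall>y\<in>gen K scal S. H1 y \<in> gen K scal S) \<and> (\<forall>y\<in>gen K scal S. H2 (H1 y) = y)
     \<and> (\<forall>y\<in>gen K scal (S \<inter> B). H2 y = y)"
proof -
  have fS: "finite S" and SA: "S \<subseteq> A" and cl: "\<And>c. c \<in> S \<inter> C \<Longrightarrow> bb c \<in> S \<or> bb c = 0"
    using S unfolding closedS_def by auto
  have SX: "S \<subseteq> X" using SA AX by blast
  have gSX: "gen K scal S \<subseteq> X" by (rule genX[OF SX])
  define u1 where "u1 s = (if s \<in> C then phi s else s)" for s
  define u2 where "u2 s = (if s \<in> C then psi s else s)" for s
  have u1X: "\<And>s. s \<in> S \<Longrightarrow> u1 s \<in> X" unfolding u1_def using SX phiX by auto
  have u2X: "\<And>s. s \<in> S \<Longrightarrow> u2 s \<in> X" unfolding u2_def using SX psiX by auto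
  obtain H1 where H1: "hom_on (gen K scal S) H1" "\<forall>s\<in>S. H1 s = u1 s"
    using univ_fin[where u=u1, OF fS SA u1X] by blast
  obtain H2 where H2: "hom_on (gen K scal S) H2" "\<forall>s\<in>S. H2 s = u2 s"
    using univ_fin[where u=u2, OF fS SA u2X] by blast
  have Sg: "\<And>s. s \<in> S \<Longrightarrow> s \<in> gen K scal S" using gen_incl by blast
  have bbg: "\<And>c. c \<in> S \<inter> C \<Longrightarrow> bb c \<in> gen K scal S"
  proof -
    fix c assume "c \<in> S \<inter> C"
    then have "bb c \<in> S \<or> bb c = 0" by (rule cl)
    then show "bb c \<in> gen K scal S" using Sg by (auto simp: gen_0)
  qed
  have H2bb: "\<And>c. c \<in> S \<inter> C \<Longrightarrow> H2 (bb c) = bb c"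
  proof -
    fix c assume c: "c \<in> S \<inter> C"
    show "H2 (bb c) = bb c"
    proof (cases "bb c = 0")
      case True then show ?thesis using homD(6)[OF H2(1)] by simp
    next
      case False
      then have "bb c \<in> S" "bb c \<in> B" using cl[OF c] bb_cases by auto
      then show ?thesis using H2(2) part unfolding u2_def by auto
    qed
  qed
  have into: "\<And>y. y \<in> gen K scal S \<Longrightarrow> H1 y \<in> gen K scal S"
  proof (rule hom_into[OF H1(1) order_refl])
    fix s assume s: "s \<in> S"
    show "H1 s \<in> gen K scal S"
    proof (cases "s \<in> C")
      case True
      then have "H1 s = scal (complex_of_real (tt s)) s + bb s" using H1(2) s unfolding u1_def phi_def by simp
      then show ?thesis using Sg[OF s] bbg[of s] s True by (simp add: gen_add gen_scal K_real)
    next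
      case False then show ?thesis using H1(2) s Sg unfolding u1_def by simp
    qed
  qed
  have comp: "hom_on (gen K scal S) (\<lambda>y. H2 (H1 y))" by (rule hom_comp[OF H1(1) into H2(1)])
  have idh: "hom_on (gen K scal S) (\<lambda>y. y)" by (rule hom_id[OF gSX])
  have inv: "\<And>y. y \<in> gen K scal S \<Longrightarrow> H2 (H1 y) = y"
  proof (rule hom_equal[OF comp idh order_refl])
    fix s assume s: "s \<in> S"
    show "H2 (H1 s) = s"
    proof (cases "s \<in> C")
      case True
      let ?t = "complex_of_real (tt s)"
      have sX: "s \<in> X" using s SX by blast
      have "H1 s = scal ?t s + bb s" using H1(2) s True unfolding u1_def phi_def by simp
      then have "H2 (H1 s) = H2 (scal ?t s) + H2 (bb s)"
        using homD(2)[OF H2(1)] Sg[OF s] bbg[of s] s True by (simp add: gen_scal K_real)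
      also have "H2 (scal ?t s) = scal ?t (H2 s)" using homD(5)[OF H2(1) K_real Sg[OF s]] .
      also have "H2 s = scal (complex_of_real (1 / tt s)) (s - bb s)" using H2(2) s True unfolding u2_def psi_def by simp
      also have "scal ?t (scal (complex_of_real (1 / tt s)) (s - bb s)) = s - bb s"
        by (rule scal_inv(1)[OF tt_nz[OF True] Xdiff[OF sX bbX]])
      also have "H2 (bb s) = bb s" using H2bb s True by simp
      finally show ?thesis by simp
    next
      case False then show ?thesis using H1(2) H2(2) s unfolding u1_def u2_def by simp
    qed
  qed
  have fixB: "\<And>y. y \<in> gen K scal (S \<inter> B) \<Longrightarrow> H2 y = y"
  proof (rule hom_equal[OF H2(1) idh])
    show "gen K scal (S \<inter> B) \<subseteq> gen K scal S" by (rule gen_mono) blast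
  next
    fix s assume "s \<in> S \<inter> B"
    then show "H2 s = s" using H2(2) part unfolding u2_def by auto
  qed
  have "\<forall>c\<in>S \<inter> C. H1 c = phi c" using H1(2) unfolding u1_def by auto
  then show ?thesis using H1(1) H2(1) into inv fixB by blast
qed

lemma proj:
  assumes S: "finite S" "S \<subseteq> A"
  shows "\<exists>H3. hom_on (gen K scal S) H3 \<and> (\<forall>y\<in>gen K scal (S \<inter> C). H3 y = y)
     \<and> (\<forall>y\<in>gen K scal (S \<inter> B). H3 y = 0)"
proof -
  have SX: "S \<subseteq> X" using S AX by blast
  define u3 where "u3 s = (if s \<in> C then s else 0)" for s
  have u3X: "\<And>s. s \<in> S \<Longrightarrow> u3 s \<in> X" unfolding u3_def using SX X0 by auto
  obtain H3 where H3: "hom_on (gen K scal S) H3" "\<forall>s\<in>S. H3 s = u3 s"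
    using univ_fin[where u=u3, OF S u3X] by blast
  have gSX: "gen K scal S \<subseteq> X" by (rule genX[OF SX])
  have a: "\<And>y. y \<in> gen K scal (S \<inter> C) \<Longrightarrow> H3 y = y"
  proof (rule hom_equal[OF H3(1) hom_id[OF gSX]])
    show "gen K scal (S \<inter> C) \<subseteq> gen K scal S" by (rule gen_mono) blast
  next
    fix s assume "s \<in> S \<inter> C"
    then show "H3 s = s" using H3(2) unfolding u3_def by auto
  qed
  have b: "\<And>y. y \<in> gen K scal (S \<inter> B) \<Longrightarrow> H3 y = 0"
  proof (rule hom_equal[OF H3(1) hom_zero])
    show "gen K scal (S \<inter> B) \<subseteq> gen K scal S" by (rule gen_mono) blast
  next
    fix s assume "s \<in> S \<inter> B"
    then show "H3 s = 0" using H3(2) part unfolding u3_def by auto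
  qed
  show ?thesis using H3(1) a b by blast
qed

end


lemma poly_eval_cong:
  assumes "\<And>i. i < n \<Longrightarrow> x i = y i"
  shows "poly_eval scal n P x = poly_eval scal n P y"
proof -
  have "\<And>m. (\<Prod>i<n. x i ^ m i) = (\<Prod>i<n. y i ^ m i)"
    by (rule prod.cong) (auto simp: assms)
  then show ?thesis by (simp add: poly_eval_def)
qed

context mainl
begin

lemma main_result:
  "\<exists>F. F \<subseteq> X \<and> is_SFG K scal F \<and> (\<exists>g. bij_betw g C F)
     \<and> (subtopology euclidean X) closure_of (gen K scal F) = X
     \<and> gen K scal F \<subseteq> (X - gen K scal B) \<union> {0}"
proof -
  define F where "F = phi ` C"
  have FX: "F \<subseteq> X" using phiX unfolding F_def by blast
  have gFX: "gen K scal F \<subseteq> X" by (rule genX[OF FX])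
  have inj: "inj_on phi C"
  proof (rule inj_onI)
    fix c c' assume c: "c \<in> C" and c': "c' \<in> C" and eq: "phi c = phi c'"
    define S where "S = {c, c'} \<union> (bb ` {c, c'} \<inter> B) \<union> {}"
    have cS: "closedS S" unfolding S_def by (rule closedS_mk) (use c c' in auto)
    have SC: "S \<inter> C = {c, c'}" unfolding S_def by (rule closedS_mk(2)) (use c c' in auto)
    obtain H1 H2 where H1: "hom_on (gen K scal S) H1" and H2: "hom_on (gen K scal S) H2"
      and H1phi: "\<forall>c\<in>S \<inter> C. H1 c = phi c" and inv: "\<forall>y\<in>gen K scal S. H2 (H1 y) = y"
      using inv_pair[OF cS] by blast
    have g: "c \<in> gen K scal S" "c' \<in> gen K scal S" using gen_incl[of S K scal] unfolding S_def by auto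
    have "H1 c = H1 c'" using H1phi eq SC by auto
    then have "H2 (H1 c) = H2 (H1 c')" by simp
    then show "c = c'" using inv g by simp
  qed
  have SFG: "is_SFG K scal F"
    unfolding is_SFG_def
  proof (intro allI ballI impI)
    fix n P x assume P: "P \<in> poly_n K n" and h: "P \<noteq> (\<lambda>_. 0) \<and> (\<forall>i<n. x i \<in> F) \<and> inj_on x {..<n}"
    define cc where "cc i = (SOME c. c \<in> C \<and> x i = phi c)" for i
    have cc: "cc i \<in> C \<and> x i = phi (cc i)" if i: "i < n" for i
    proof -
      have "x i \<in> phi ` C" using h i unfolding F_def by auto
      then have "\<exists>c. c \<in> C \<and> x i = phi c" by blast
      then show "cc i \<in> C \<and> x i = phi (cc i)" unfolding cc_def by (rule someI_ex)
    qed
    have ccinj: "inj_on cc {..<n}"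
    proof (rule inj_onI)
      fix i j assume i: "i \<in> {..<n}" and j: "j \<in> {..<n}" and e: "cc i = cc j"
      have "x i = x j" using cc[of i] cc[of j] i j e by simp
      moreover have "inj_on x {..<n}" using h by blast
      ultimately show "i = j" using i j by (simp add: inj_on_eq_iff)
    qed
    define T where "T = cc ` {..<n}"
    have T: "finite T" "T \<subseteq> C" using cc unfolding T_def by auto
    define S where "S = T \<union> (bb ` T \<inter> B) \<union> {}"
    have cS: "closedS S" unfolding S_def by (rule closedS_mk) (use T in auto)
    have SC: "S \<inter> C = T" unfolding S_def by (rule closedS_mk(2)) (use T in auto)
    obtain H1 H2 where H1: "hom_on (gen K scal S) H1" and H2: "hom_on (gen K scal S) H2"
      and H1phi: "\<forall>c\<in>S \<inter> C. H1 c = phi c" and inv: "\<forall>y\<in>gen K scal S. H2 (H1 y) = y"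
      using inv_pair[OF cS] by blast
    have ccS: "cc i \<in> gen K scal S" if "i < n" for i
      using gen_incl[of S K scal] that unfolding S_def T_def by auto
    have sub: "is_subalgebra K scal (gen K scal S)" by (rule gen_subalg)
    have ev: "poly_eval scal n P cc \<in> gen K scal S" by (rule eval_in[OF sub P ccS])
    have "poly_eval scal n P x = poly_eval scal n P (\<lambda>i. H1 (cc i))"
    proof (rule poly_eval_cong)
      fix i assume i: "i < n"
      have "cc i \<in> S \<inter> C" using i SC unfolding T_def by auto
      then show "x i = H1 (cc i)" using H1phi cc[OF i] by auto
    qed
    also have "\<dots> = H1 (poly_eval scal n P cc)" by (rule hom_eval[OF H1 sub P ccS, symmetric])
    finally have eq: "poly_eval scal n P x = H1 (poly_eval scal n P cc)" .
    have ne: "poly_eval scal n P cc \<noteq> 0"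
      by (rule sfgD[OF P]) (use h cc CA ccinj in auto)
    show "poly_eval scal n P x \<noteq> 0"
    proof
      assume "poly_eval scal n P x = 0"
      then have "H1 (poly_eval scal n P cc) = 0" using eq by simp
      then have "H2 (H1 (poly_eval scal n P cc)) = H2 0" by simp
      then have "poly_eval scal n P cc = 0" using inv ev homD(6)[OF H2] by simp
      then show False using ne by simp
    qed
  qed
  have avoid: "gen K scal F \<subseteq> (X - gen K scal B) \<union> {0}"
  proof
    fix z assume z: "z \<in> gen K scal F"
    have zX: "z \<in> X" using gFX z by blast
    show "z \<in> (X - gen K scal B) \<union> {0}"
    proof (cases "z \<in> gen K scal B")
      case False then show ?thesis using zX by blast
    next
      case True
      obtain F1 where F1: "F1 \<subseteq> F" "finite F1" "z \<in> gen K scal F1" using gen_finite[OF z] by blast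
      have "F1 \<subseteq> phi ` C" using F1(1) unfolding F_def .
      then obtain T where T: "T \<subseteq> C" "finite T" "F1 = phi ` T" using finite_subset_image[OF F1(2)] by blast
      obtain B1 where B1: "B1 \<subseteq> B" "finite B1" "z \<in> gen K scal B1" using gen_finite[OF True] by blast
      define S where "S = T \<union> (bb ` T \<inter> B) \<union> B1"
      have cS: "closedS S" unfolding S_def by (rule closedS_mk) (use T B1 in auto)
      have SC: "S \<inter> C = T" unfolding S_def by (rule closedS_mk(2)) (use T B1 in auto)
      have SB: "B1 \<subseteq> S \<inter> B" unfolding S_def by (rule closedS_mk(3)) (use T B1 in auto)
      obtain H1 H2 where H1: "hom_on (gen K scal S) H1" and H2: "hom_on (gen K scal S) H2"
        and H1phi: "\<forall>c\<in>S \<inter> C. H1 c = phi c" and inv: "\<forall>y\<in>gen K scal S. H2 (H1 y) = y"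
        and fixB: "\<forall>y\<in>gen K scal (S \<inter> B). H2 y = y"
        using inv_pair[OF cS] by blast
      have fS: "finite S" "S \<subseteq> A" using cS unfolding closedS_def by auto
      obtain H3 where H3a: "\<forall>y\<in>gen K scal (S \<inter> C). H3 y = y" and H3b: "\<forall>y\<in>gen K scal (S \<inter> B). H3 y = 0"
        using proj[OF fS] by blast
      have gT: "gen K scal T \<subseteq> gen K scal S" by (rule gen_mono) (auto simp: S_def)
      have "F1 = H1 ` T" unfolding T(3) using H1phi SC by (auto intro: image_cong)
      then have "z \<in> H1 ` gen K scal T" using hom_image[OF H1 gT] F1(3) by blast
      then obtain w where w: "w \<in> gen K scal T" "z = H1 w" by blast
      have wS: "w \<in> gen K scal S" using gT w(1) by blast
      have zB: "z \<in> gen K scal (S \<inter> B)" using gen_mono[OF SB, of K scal] B1(3) by blast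
      have "H2 z = w" using inv wS w(2) by simp
      moreover have "H2 z = z" using fixB zB by blast
      ultimately have wz: "w = z" by simp
      have "H3 w = w" using H3a w(1) SC by simp
      moreover have "H3 z = 0" using H3b zB by blast
      ultimately have "z = 0" using wz by simp
      then show ?thesis by simp
    qed
  qed
  have dense: "top_of_set X closure_of gen K scal F = X"
  proof
    let ?cl = "top_of_set X closure_of gen K scal F"
    show "?cl \<subseteq> X" using closure_of_subset_topspace[of "top_of_set X" "gen K scal F"] by simp
    have clsub: "is_subalgebra K scal ?cl" by (rule closure_subalg[OF gen_subalg gFX])
    have gFcl: "gen K scal F \<subseteq> ?cl" using closure_of_subset[of "gen K scal F" "top_of_set X"] gFX by simp
    have Fcl: "F \<subseteq> ?cl" using gen_incl[of F K scal] gFcl by blast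
    have Bcl: "B \<subseteq> ?cl"
    proof
      fix b assume b: "b \<in> B"
      show "b \<in> ?cl" unfolding in_closure_of
      proof (intro conjI allI impI)
        show "b \<in> topspace (top_of_set X)" using b BX by auto
      next
        fix U assume U: "b \<in> U \<and> openin (top_of_set X) U"
        obtain S' where S': "S' \<subseteq> Bs" "U = \<Union>S'" using base U unfolding is_base_of_def by blast
        then obtain V where V: "V \<in> Bs" "b \<in> V" "V \<subseteq> U" using U by blast
        obtain c where c: "c \<in> C" "V = f c" using Bsf V(1) by blast
        have a: "act c" unfolding act_def using V c b by blast
        have "phi c \<in> V" using tt_act[OF c(1) a] c(2) by simp
        moreover have "phi c \<in> gen K scal F" using gen_incl[of F K scal] c(1) unfolding F_def by blast
        ultimately show "\<exists>y. y \<in> gen K scal F \<and> y \<in> U" using V(3) by blast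
      qed
    qed
    have Ccl: "C \<subseteq> ?cl"
    proof
      fix c assume c: "c \<in> C"
      have p: "phi c \<in> ?cl" using Fcl c unfolding F_def by blast
      have "bb c \<in> B \<or> bb c = 0" by (rule bb_cases)
      moreover have "0 \<in> ?cl" using clsub unfolding is_subalgebra_def by blast
      ultimately have bcl: "bb c \<in> ?cl" using Bcl by auto
      have "phi c + - bb c \<in> ?cl" using clsub p bcl unfolding is_subalgebra_def by blast
      then have "scal (complex_of_real (1 / tt c)) (phi c + - bb c) \<in> ?cl"
        using clsub K_real unfolding is_subalgebra_def by blast
      moreover have "phi c + - bb c = scal (complex_of_real (tt c)) c" unfolding phi_def by simp
      moreover have "scal (complex_of_real (1 / tt c)) (scal (complex_of_real (tt c)) c) = c"
        by (rule scal_inv(2)[OF tt_nz[OF c]]) (use c CX in auto)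
      ultimately show "c \<in> ?cl" by simp
    qed
    have "A \<subseteq> ?cl" using Bcl Ccl part by blast
    then have "gen K scal A \<subseteq> ?cl" by (rule gen_least[OF _ clsub])
    then show "X \<subseteq> ?cl" using XA by simp
  qed
  have "bij_betw phi C F" unfolding bij_betw_def F_def using inj by simp
  then show ?thesis using FX SFG dense avoid by blast
qed

end

theorem theorem4p3:
  fixes K :: "complex set" and scal :: "complex \<Rightarrow> 'a::{comm_ring_1,topological_space} \<Rightarrow> 'a"
    and X A B C :: "'a set"
  assumes K: "K = \<real> \<or> K = UNIV"
    and top: "is_comm_top_algebra K scal X"
    and sfg: "is_SFG K scal A"
    and XA: "X = gen K scal A"
    and part: "B \<union> C = A" "B \<inter> C = {}"
    and inf: "infinite C"
    and weight: "\<exists>Bs f. is_base_of X Bs \<and> Bs \<subseteq> f ` C"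
  shows "\<exists>F. F \<subseteq> X \<and> is_SFG K scal F \<and> (\<exists>g. bij_betw g C F)
           \<and> (subtopology euclidean X) closure_of (gen K scal F) = X
           \<and> gen K scal F \<subseteq> (X - gen K scal B) \<union> {0}"
proof -
  obtain Bs f where w: "is_base_of X Bs" "Bs \<subseteq> f ` C" using weight by blast
  have ca: "is_comm_algebra K scal X" using top unfolding is_comm_top_algebra_def by blast
  have AX: "A \<subseteq> X" using XA gen_incl[of A K scal] by simp
  interpret mainl K scal X A B C Bs f
  proof unfold_locales
    show "K = \<real> \<or> K = UNIV" by (rule K)
    show "is_comm_algebra K scal X" by (rule ca)
    show "is_SFG K scal A" by (rule sfg)
    show "A \<subseteq> X" by (rule AX)
    show "is_comm_top_algebra K scal X" by (rule top)
    show "X = gen K scal A" by (rule XA)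
    show "B \<union> C = A" by (rule part(1))
    show "B \<inter> C = {}" by (rule part(2))
    show "is_base_of X Bs" by (rule w(1))
    show "Bs \<subseteq> f ` C" by (rule w(2))
  qed
  show ?thesis by (rule main_result)
qed


end
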